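(* Let $X$ be a geodesic $\delta$--hyperbolic space ($\delta\geqslant0$), $x_0\in X$, and let $u_1,u_2,v,w_1,w_2$ be isometries of $X$ with $u_1vw_1=u_2vw_2$ such that the products $u_1v$, $u_2v$, $vw_1$ and $vw_2$ are reduced at $x_0$. Assume $|vx_0-x_0|>26\delta$, $|u_1x_0-u_2x_0|\leqslant|vx_0-x_0|$ and $|u_1x_0-x_0|\leqslant|u_2x_0-x_0|$. Then $x_0$ and $vx_0$ are in $C_{u_1^{-1}u_2}^{+190\delta}$. Moreover, $(x_0,u_2x_0)_{u_1x_0}\leqslant 24\delta$, $(u_1x_0,u_1vx_0)_{u_2x_0}\leqslant 66\delta$ and $(u_2x_0,u_2vx_0)_{u_1vx_0}\leqslant 138\delta$.
   Context: Distance $|x-y|$; Gromov product $(p,q)_x:=\frac12(|p-x|+|q-x|-|p-q|)$; $X$ is $\delta$--hyperbolic if $(p,r)_x\geqslant\min\{(p,q)_x,(q,r)_x\}-\delta$ for all $p,q,r,x$. The product $uv$ of two isometries is reduced at $x_0$ if $(u^{-1}x_0,vx_0)_{x_0}\leqslant\delta$. For an isometry $g$, $[g]:=\inf_x|gx-x|$ and $C_g:=\{x\in X\mid|gx-x|\leqslant[g]+8\delta\}$; $A^{+a}:=\{x\mid d(x,A)\leqslant a\}$. *)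

theory Defs
  imports "HOL-Analysis.Analysis"
begin

definition gromov_product :: "'a::metric_space \<Rightarrow> 'a \<Rightarrow> 'a \<Rightarrow> real" where
  "gromov_product p q x = (dist p x + dist q x - dist p q) / 2"

definition hyperbolic :: "real \<Rightarrow> ('a::metric_space) itself \<Rightarrow> bool" where
  "hyperbolic \<delta> _ \<longleftrightarrow> (\<forall>p q r x::'a.
      gromov_product p r x \<ge> min (gromov_product p q x) (gromov_product q r x) - \<delta>)"

definition geodesic_space :: "('a::metric_space) itself \<Rightarrow> bool" where
  "geodesic_space _ \<longleftrightarrow> (\<forall>x y::'a. \<exists>\<gamma>::real \<Rightarrow> 'a.
      \<gamma> 0 = x \<and> \<gamma> (dist x y) = y \<and>
      (\<forall>s\<in>{0..dist x y}. \<forall>t\<in>{0..dist x y}. dist (\<gamma> s) (\<gamma> t) = \<bar>s - t\<bar>))"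

definition isometry :: "('a::metric_space \<Rightarrow> 'a) \<Rightarrow> bool" where
  "isometry g \<longleftrightarrow> bij g \<and> (\<forall>x y. dist (g x) (g y) = dist x y)"

definition reduced_at :: "real \<Rightarrow> ('a::metric_space \<Rightarrow> 'a) \<Rightarrow> ('a \<Rightarrow> 'a) \<Rightarrow> 'a \<Rightarrow> bool" where
  "reduced_at \<delta> u v x0 \<longleftrightarrow> gromov_product (inv u x0) (v x0) x0 \<le> \<delta>"

definition transl_len :: "('a::metric_space \<Rightarrow> 'a) \<Rightarrow> real" where
  "transl_len g = (INF x. dist (g x) x)"

definition char_set :: "real \<Rightarrow> ('a::metric_space \<Rightarrow> 'a) \<Rightarrow> 'a set" where
  "char_set \<delta> g = {x. dist (g x) x \<le> transl_len g + 8 * \<delta>}"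

text \<open>A^{+a} = {x | d(x,A) \<le> a}; d(x,{}) is +infinity by convention.\<close>
definition nbhd :: "'a::metric_space set \<Rightarrow> real \<Rightarrow> 'a set" where
  "nbhd A a = {x. A \<noteq> {} \<and> infdist x A \<le> a}"

end

theory Submission
  imports Defs
begin

lemma hyp4:
  fixes p q r x :: "'a::metric_space"
  assumes "hyperbolic \<delta> TYPE('a)"
  shows "dist p x + dist q x - dist p q \<le> dist p x + dist r x - dist p r + 2*\<delta> \<or>
         dist q x + dist r x - dist q r \<le> dist p x + dist r x - dist p r + 2*\<delta>"
proof -
  have "gromov_product p r x \<ge> min (gromov_product p q x) (gromov_product q r x) - \<delta>"
    using assms unfolding hyperbolic_def by blast
  then have "gromov_product p q x \<le> gromov_product p r x + \<delta> \<or> gromov_product q r x \<le> gromov_product p r x + \<delta>"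
    by linarith
  then show ?thesis unfolding gromov_product_def by (auto simp: field_simps)
qed

lemma hyp_delta_nonneg:
  assumes "hyperbolic \<delta> TYPE('a::metric_space)"
  shows "\<delta> \<ge> 0"
proof -
  obtain p :: 'a where True by blast
  from hyp4[OF assms, of p p p p] show ?thesis by auto
qed

lemma online:
  fixes bp z w w' :: "'a::metric_space"
  assumes h: "hyperbolic \<delta> TYPE('a)"
    and a: "gromov_product bp z w \<le> e" and b: "gromov_product bp z w' \<le> e"
  shows "dist w w' \<le> \<bar>dist bp w - dist bp w'\<bar> + 4*e + 2*\<delta>"
proof -
  have t: "dist bp z \<le> dist bp w + dist w z" "dist bp z \<le> dist bp w' + dist w' z"
    by (rule dist_triangle)+
  have c: "dist w w' = dist w' w" "dist z w = dist w z" "dist z w' = dist w' z"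
    by (simp_all add: dist_commute)
  have ab: "dist bp w + dist w z - dist bp z \<le> 2*e" "dist bp w' + dist w' z - dist bp z \<le> 2*e"
    using a b c unfolding gromov_product_def by auto
  have abs: "dist bp w - dist bp w' \<le> \<bar>dist bp w - dist bp w'\<bar>" "dist bp w' - dist bp w \<le> \<bar>dist bp w - dist bp w'\<bar>"
    by auto
  from hyp4[OF h, where p=bp and q=w' and r=z and x=w]
  show ?thesis
  proof
    assume "dist bp w + dist w' w - dist bp w' \<le> dist bp w + dist z w - dist bp z + 2 * \<delta>"
    then show ?thesis using t c ab abs by linarith
  next
    assume "dist w' w + dist z w - dist w' z \<le> dist bp w + dist z w - dist bp z + 2 * \<delta>"
    then show ?thesis using t c ab abs by linarith
  qed
qed

lemma gp_le: "gromov_product p q (x::'a::metric_space) \<le> dist p x"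
  unfolding gromov_product_def using dist_triangle[of q x p] by (simp add: dist_commute)

lemma gp_nonneg: "gromov_product p q (x::'a::metric_space) \<ge> 0"
  unfolding gromov_product_def using dist_triangle[of p q x] by (simp add: dist_commute)

lemma gp_iso:
  assumes "\<forall>a b. dist (g a) (g b) = dist a b"
  shows "gromov_product (g p) (g q) (g x) = gromov_product p q x"
  using assms unfolding gromov_product_def by simp

lemma hypI:
  fixes p q r x :: "'a::metric_space"
  assumes "hyperbolic \<delta> TYPE('a)" "gromov_product p q x > gromov_product p r x + \<delta>"
  shows "gromov_product q r x \<le> gromov_product p r x + \<delta>"
proof -
  have "gromov_product p r x \<ge> min (gromov_product p q x) (gromov_product q r x) - \<delta>"
    using assms unfolding hyperbolic_def by blast
  then show ?thesis using assms(2) by (auto simp: min_def split: if_splits)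
qed

lemma gp_alt: "gromov_product p q x = dist p x / 2 + dist q x / 2 - dist p q / 2"
  unfolding gromov_product_def by (simp add: field_simps)

lemma core:
  fixes bp p1 p2 q1 q2 z k2 k3 :: "'a::metric_space"
  assumes h: "hyperbolic \<delta> TYPE('a)"
    and F1: "gromov_product bp q1 p1 \<le> \<delta>" and F2: "gromov_product bp q2 p2 \<le> \<delta>"
    and F3: "gromov_product p1 z q1 \<le> \<delta>" and F4: "gromov_product p2 z q2 \<le> \<delta>"
    and L1: "dist p1 q1 = L" and L2: "dist p2 q2 = L" and Lb: "L > 26*\<delta>"
    and tL: "dist p1 p2 \<le> L" and ord: "dist bp p1 \<le> dist bp p2"
    and K1: "dist k2 p2 = dist p1 p2" and K2: "dist k2 q2 = dist p2 q1"
    and K3: "dist k3 q2 = dist q1 q2" and K4: "dist k3 p2 = dist p1 q2"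
  shows "gromov_product bp p2 p1 \<le> 24*\<delta> \<and> gromov_product p1 q1 p2 \<le> 66*\<delta> \<and>
    gromov_product p2 q2 q1 \<le> 138*\<delta> \<and> gromov_product p1 k2 p2 \<le> 187*\<delta> \<and>
    gromov_product q1 k3 q2 \<le> 187*\<delta>"
proof -
  have d0: "\<delta> \<ge> 0" using hyp_delta_nonneg[OF h] .
  have S1: "gromov_product bp z q1 \<le> 2*\<delta>"
  proof -
    have "gromov_product p1 bp q1 > gromov_product p1 z q1 + \<delta>"
      using F1 F3 L1 Lb d0 by (simp only: gp_alt dist_commute; linarith)
    from hypI[OF h this] show ?thesis using F3 by linarith
  qed
  have S2: "gromov_product bp z p1 \<le> 2*\<delta>"
  proof (rule ccontr)
    assume "\<not> ?thesis"
    then have "gromov_product bp z p1 > gromov_product bp q1 p1 + \<delta>" using F1 by linarith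
    from hypI[OF h this] have "gromov_product z q1 p1 \<le> gromov_product bp q1 p1 + \<delta>" .
    then show False using F1 F3 L1 Lb d0 by (simp only: gp_alt dist_commute; linarith)
  qed
  have S3: "gromov_product bp z q2 \<le> 2*\<delta>"
  proof -
    have "gromov_product p2 bp q2 > gromov_product p2 z q2 + \<delta>"
      using F2 F4 L2 Lb d0 by (simp only: gp_alt dist_commute; linarith)
    from hypI[OF h this] show ?thesis using F4 by linarith
  qed
  have S4: "gromov_product bp z p2 \<le> 2*\<delta>"
  proof (rule ccontr)
    assume "\<not> ?thesis"
    then have "gromov_product bp z p2 > gromov_product bp q2 p2 + \<delta>" using F2 by linarith
    from hypI[OF h this] have "gromov_product z q2 p2 \<le> gromov_product bp q2 p2 + \<delta>" .
    then show False using F2 F4 L2 Lb d0 by (simp only: gp_alt dist_commute; linarith)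
  qed
  have O12: "dist p1 p2 \<le> \<bar>dist bp p1 - dist bp p2\<bar> + 10*\<delta>"
    using online[OF h S2 S4] by linarith
  have O21: "dist p2 q1 \<le> \<bar>dist bp p2 - dist bp q1\<bar> + 10*\<delta>"
    using online[OF h S4 S1] by linarith
  have O22: "dist q1 q2 \<le> \<bar>dist bp q1 - dist bp q2\<bar> + 10*\<delta>"
    using online[OF h S1 S3] by linarith
  have T: "dist bp q1 \<le> dist bp p1 + dist p1 q1" "dist bp q2 \<le> dist bp p2 + dist p2 q2"
    "dist bp p2 \<le> dist bp p1 + dist p1 p2" "dist bp q2 \<le> dist bp p1 + dist p1 q2"
    by (rule dist_triangle)+
  have G1a: "dist bp p1 + dist p1 q1 - dist bp q1 \<le> 2*\<delta>"
    using F1 by (simp only: gp_alt dist_commute; linarith)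
  have G1b: "dist bp p2 + dist p2 q2 - dist bp q2 \<le> 2*\<delta>"
    using F2 by (simp only: gp_alt dist_commute; linarith)
  note G1 = G1a G1b
  have A: "gromov_product bp p2 p1 \<le> 24*\<delta>"
    using O12 ord d0 by (simp only: gp_alt dist_commute; linarith)
  have B: "gromov_product p1 q1 p2 \<le> 66*\<delta>"
    using O12 O21 ord d0 T G1 L1 L2 tL by (simp only: gp_alt dist_commute; linarith)
  have C: "gromov_product p2 q2 q1 \<le> 138*\<delta>"
    using O12 O21 O22 ord d0 T G1 L1 L2 tL by (simp only: gp_alt dist_commute; linarith)
  have X: "gromov_product p1 k2 p2 \<le> 187*\<delta>"
  proof (rule ccontr)
    assume nX: "\<not> ?thesis"
    have P: "gromov_product p1 q2 p2 \<le> 6*\<delta>"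
      using O12 O21 ord d0 T G1 L1 L2 tL by (simp only: gp_alt dist_commute; linarith)
    have Y: "gromov_product k2 q2 p2 \<ge> dist p1 p2 - 12*\<delta>"
      using O12 O21 ord d0 T G1 L1 L2 tL K1 K2 by (simp only: gp_alt dist_commute; linarith)
    have le: "gromov_product p1 k2 p2 \<le> dist p1 p2" using gp_le .
    have "gromov_product p1 k2 p2 > gromov_product p1 q2 p2 + \<delta>" using nX P d0 by linarith
    from hypI[OF h this] have "gromov_product k2 q2 p2 \<le> gromov_product p1 q2 p2 + \<delta>" .
    then show False using Y P le nX d0 by linarith
  qed
  have X': "gromov_product q1 k3 q2 \<le> 187*\<delta>"
  proof (rule ccontr)
    assume nX: "\<not> ?thesis"
    have P: "gromov_product p2 k3 q2 \<le> 9*\<delta>"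
      using O12 O21 O22 ord d0 T G1 L1 L2 tL K3 K4 by (simp only: gp_alt dist_commute; linarith)
    have Y: "gromov_product p2 q1 q2 \<ge> dist q1 q2 / 2 + dist p1 p2 / 2 - 12*\<delta>"
      using O12 O21 ord d0 T G1 L1 L2 tL by (simp only: gp_alt dist_commute; linarith)
    have le: "gromov_product q1 k3 q2 \<le> dist q1 q2" using gp_le .
    have ge: "dist p1 p2 \<ge> 0" by simp
    have "gromov_product p2 q1 q2 > gromov_product p2 k3 q2 + \<delta> \<or> gromov_product p2 q1 q2 \<le> gromov_product p2 k3 q2 + \<delta>"
      by linarith
    then show False
    proof
      assume "gromov_product p2 q1 q2 > gromov_product p2 k3 q2 + \<delta>"
      from hypI[OF h this] show False using P nX d0 by linarith
    next
      assume "gromov_product p2 q1 q2 \<le> gromov_product p2 k3 q2 + \<delta>"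
      then show False using P Y le ge nX d0 by linarith
    qed
  qed
  show ?thesis using A B C X X' by blast
qed

lemma chain:
  fixes g :: "'a::metric_space \<Rightarrow> 'a"
  assumes h: "hyperbolic \<delta> TYPE('a)"
    and iso: "\<And>a b. dist (g a) (g b) = dist a b"
    and a: "gromov_product x (g (g x)) (g x) \<le> \<alpha>"
    and E: "dist (g x) x > 2*\<alpha> + 2*\<delta>"
  shows "dist (g z) z \<ge> dist (g x) x - 2*\<alpha> - 2*\<delta>"
proof -
  have d0: "\<delta> \<ge> 0" using hyp_delta_nonneg[OF h] .
  have a0: "\<alpha> \<ge> 0" using gp_nonneg[of x "g (g x)" "g x"] a by linarith
  have isoN: "dist ((g^^n) p) ((g^^n) q) = dist p q" for n p q
    by (induct n) (auto simp: iso)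
  define E where "E = dist (g x) x"
  define c where "c = E - 2*\<alpha> - 2*\<delta>"
  have shift: "(g^^Suc n) p = (g^^n) (g p)" for n p
    by (simp add: funpow_Suc_right del: funpow.simps)
  have stepE: "dist ((g^^Suc n) p) ((g^^n) p) = dist (g p) p" for n p
    unfolding shift using isoN[of n "g p" p] .
  have Q: "gromov_product x ((g^^(Suc (Suc n))) x) ((g^^(Suc n)) x) \<le> \<alpha> + \<delta>" for n
  proof (induct n)
    case 0
    then show ?case using a d0 by (simp add: numeral_2_eq_2)
  next
    case (Suc n)
    define prev where "prev = (g^^Suc n) x"
    define w where "w = (g^^Suc (Suc n)) x"
    define nxt where "nxt = (g^^Suc (Suc (Suc n))) x"
    have e1: "w = (g^^Suc n) (g x)" unfolding w_def shift ..
    have e2: "nxt = (g^^Suc n) (g (g x))" unfolding nxt_def shift ..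
    have "gromov_product prev nxt w = gromov_product x (g (g x)) (g x)"
      unfolding e1 e2 prev_def by (rule gp_iso) (intro allI, rule isoN)
    then have pn: "gromov_product prev nxt w \<le> \<alpha>" using a by simp
    have dw: "dist prev w = E" unfolding prev_def w_def E_def using stepE[of "Suc n" x]
      by (simp add: dist_commute)
    have IH: "gromov_product x w prev \<le> \<alpha> + \<delta>" using Suc unfolding w_def prev_def .
    have "gromov_product prev x w = dist prev w - gromov_product x w prev"
      unfolding gp_alt by (simp add: dist_commute)
    then have "gromov_product prev x w > gromov_product prev nxt w + \<delta>"
      using dw IH pn E E_def by linarith
    from hypI[OF h this] have "gromov_product x nxt w \<le> \<alpha> + \<delta>" using pn by linarith
    then show ?case unfolding nxt_def w_def .
  qed
  have D: "dist x ((g^^Suc n) x) \<ge> real (Suc n) * c" for n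
  proof (induct n)
    case 0
    then show ?case using a0 d0 by (simp add: c_def E_def dist_commute)
  next
    case (Suc n)
    have "dist x ((g^^Suc (Suc n)) x) = dist x ((g^^Suc n) x) + dist ((g^^Suc n) x) ((g^^Suc (Suc n)) x)
       - 2 * gromov_product x ((g^^(Suc (Suc n))) x) ((g^^(Suc n)) x)"
      unfolding gp_alt by (simp add: dist_commute)
    moreover have "dist ((g^^Suc n) x) ((g^^Suc (Suc n)) x) = E"
      using stepE[of "Suc n" x] by (simp add: E_def dist_commute)
    ultimately show ?case using Suc Q[of n] by (simp add: c_def algebra_simps)
  qed
  have Z: "dist ((g^^n) z) z \<le> real n * dist (g z) z" for n
  proof (induct n)
    case 0
    then show ?case by simp
  next
    case (Suc n)
    have "dist ((g^^Suc n) z) z \<le> dist ((g^^Suc n) z) ((g^^n) z) + dist ((g^^n) z) z"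
      by (rule dist_triangle)
    then show ?case using Suc stepE[of n z] by (simp add: algebra_simps)
  qed
  have T: "dist x ((g^^n) x) \<le> 2 * dist x z + dist ((g^^n) z) z" for n
  proof -
    have t1: "dist x ((g^^n) x) \<le> dist x z + dist z ((g^^n) x)" by (rule dist_triangle)
    have t2: "dist z ((g^^n) x) \<le> dist z ((g^^n) z) + dist ((g^^n) z) ((g^^n) x)" by (rule dist_triangle)
    from t1 t2 have "dist x ((g^^n) x) \<le> dist x z + dist z ((g^^n) z) + dist ((g^^n) z) ((g^^n) x)"
      by linarith
    then show ?thesis using isoN[of n z x] by (simp add: dist_commute)
  qed
  show ?thesis
  proof (rule ccontr)
    assume "\<not> ?thesis"
    then have lt: "dist (g z) z < c" unfolding c_def E_def by linarith
    obtain n where n: "2 * dist x z < real n * (c - dist (g z) z)"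
      using reals_Archimedean3[of "c - dist (g z) z"] lt by auto
    have "real (Suc n) * (c - dist (g z) z) > 2 * dist x z"
    proof -
      have "real n * (c - dist (g z) z) \<le> real (Suc n) * (c - dist (g z) z)"
        using lt by (intro mult_right_mono) auto
      then show ?thesis using n by linarith
    qed
    moreover have "real (Suc n) * c \<le> 2 * dist x z + real (Suc n) * dist (g z) z"
      using D[of n] T[of "Suc n"] Z[of "Suc n"] by linarith
    ultimately show False by (simp add: algebra_simps)
  qed
qed

lemma transl_ge: "(\<And>z. c \<le> dist (g z) z) \<Longrightarrow> c \<le> transl_len g"
  unfolding transl_len_def by (rule cINF_greatest) auto

lemma transl_nonneg: "0 \<le> transl_len g"
  by (rule transl_ge) simp

lemma transl_le: "transl_len g \<le> dist (g z) z"
  unfolding transl_len_def by (rule cINF_lower) (auto intro: bdd_belowI2[where m=0])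

lemma mid_C:
  fixes g :: "'a::metric_space \<Rightarrow> 'a"
  assumes h: "hyperbolic \<delta> TYPE('a)"
    and iso: "\<And>a b. dist (g a) (g b) = dist a b"
    and m1: "dist a m = dist a (g a) / 2" and m2: "dist m (g a) = dist a (g a) / 2"
  shows "m \<in> char_set \<delta> g"
proof -
  have d0: "\<delta> \<ge> 0" using hyp_delta_nonneg[OF h] .
  define E where "E = dist (g m) m"
  show ?thesis
  proof (cases "E \<le> 8*\<delta>")
    case True
    then show ?thesis using transl_nonneg[of g] unfolding char_set_def E_def by auto
  next
    case False
    define D where "D = dist a (g a)"
    have f1: "dist (g m) (g a) = D/2" using iso[of m a] m1 by (simp add: D_def dist_commute)
    have f2: "dist (g m) (g (g a)) = D/2" using iso[of m "g a"] m2 by (simp add: D_def)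
    have f3: "dist (g a) (g (g a)) = D" using iso[of a "g a"] by (simp add: D_def)
    have f4: "dist (g (g m)) (g m) = E" using iso[of "g m" m] by (simp add: E_def)
    have f5: "dist (g (g m)) (g (g a)) = D/2" using iso[of "g m" "g a"] f1 by simp
    have f6: "dist m (g a) = D/2" using m2 by (simp add: D_def)
    have "gromov_product (g a) m (g m) > gromov_product (g a) (g (g a)) (g m) + \<delta>"
      using f1 f2 f3 f4 f5 f6 False d0 unfolding E_def by (simp only: gp_alt dist_commute; linarith)
    from hypI[OF h this] have s1: "gromov_product m (g (g a)) (g m) \<le> gromov_product (g a) (g (g a)) (g m) + \<delta>" .
    have X: "gromov_product m (g (g m)) (g m) \<le> 2*\<delta>"
    proof (rule ccontr)
      assume nX: "\<not> ?thesis"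
      have "gromov_product m (g (g m)) (g m) > gromov_product m (g (g a)) (g m) + \<delta>"
        using s1 nX f1 f2 f3 f4 f5 f6 d0 by (simp only: gp_alt dist_commute; linarith)
      from hypI[OF h this] show False
        using s1 f1 f2 f3 f4 f5 f6 False d0 unfolding E_def by (simp only: gp_alt dist_commute; linarith)
    qed
    have "dist (g m) m > 2*(2*\<delta>) + 2*\<delta>" using False d0 unfolding E_def by linarith
    from chain[OF h iso X this] have "\<And>z. dist (g z) z \<ge> dist (g m) m - 2*(2*\<delta>) - 2*\<delta>" .
    then have "transl_len g \<ge> dist (g m) m - 2*(2*\<delta>) - 2*\<delta>" by (rule transl_ge)
    then show ?thesis unfolding char_set_def using d0 by simp
  qed
qed

lemma near_C:
  fixes g :: "'a::metric_space \<Rightarrow> 'a"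
  assumes h: "hyperbolic \<delta> TYPE('a)" and geo: "geodesic_space TYPE('a)"
    and bj: "bij g" and iso: "\<And>a b. dist (g a) (g b) = dist a b"
    and a: "gromov_product x (g (g x)) (g x) \<le> \<alpha>"
  shows "x \<in> nbhd (char_set \<delta> g) (\<alpha> + 3*\<delta>)"
proof -
  have d0: "\<delta> \<ge> 0" using hyp_delta_nonneg[OF h] .
  define t where "t = dist x (g x)"
  obtain \<gamma> :: "real \<Rightarrow> 'a" where g0: "\<gamma> 0 = x" and g1: "\<gamma> t = g x"
    and gd: "\<forall>s\<in>{0..t}. \<forall>u\<in>{0..t}. dist (\<gamma> s) (\<gamma> u) = \<bar>s - u\<bar>"
    using geo unfolding geodesic_space_def t_def by blast
  define y where "y = \<gamma> (t/2)"
  have t0: "t \<ge> 0" unfolding t_def by simp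
  have mem: "0 \<in> {0..t}" "t/2 \<in> {0..t}" "t \<in> {0..t}" using t0 by auto
  have "dist (\<gamma> 0) (\<gamma> (t/2)) = \<bar>0 - t/2\<bar>" using gd mem by blast
  then have xy: "dist x y = t/2" using t0 unfolding y_def g0 by simp
  have "dist (\<gamma> (t/2)) (\<gamma> t) = \<bar>t/2 - t\<bar>" using gd mem by blast
  then have ygx: "dist y (g x) = t/2" using t0 unfolding y_def g1 by simp
  define a where "a = inv g y"
  have ga: "g a = y" unfolding a_def using bj by (simp add: bij_is_surj surj_f_inv_f)
  have ax: "dist a x = t/2" using iso[of a x] ga ygx by simp
  define D where "D = dist a y"
  obtain \<gamma>2 :: "real \<Rightarrow> 'a" where h0: "\<gamma>2 0 = a" and h1: "\<gamma>2 D = y"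
    and hd: "\<forall>s\<in>{0..D}. \<forall>u\<in>{0..D}. dist (\<gamma>2 s) (\<gamma>2 u) = \<bar>s - u\<bar>"
    using geo unfolding geodesic_space_def D_def by blast
  define m where "m = \<gamma>2 (D/2)"
  have D0: "D \<ge> 0" unfolding D_def by simp
  have mem2: "0 \<in> {0..D}" "D/2 \<in> {0..D}" "D \<in> {0..D}" using D0 by auto
  have "dist (\<gamma>2 0) (\<gamma>2 (D/2)) = \<bar>0 - D/2\<bar>" using hd mem2 by blast
  then have am: "dist a m = D/2" using D0 unfolding m_def h0 by simp
  have "dist (\<gamma>2 (D/2)) (\<gamma>2 D) = \<bar>D/2 - D\<bar>" using hd mem2 by blast
  then have my: "dist m y = D/2" using D0 unfolding m_def h1 by simp
  have mC: "m \<in> char_set \<delta> g"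
    by (rule mid_C[OF h iso]) (use am my ga D_def in auto)
  have xm: "dist x m \<le> t/2 - D/2 + 2*\<delta>"
  proof (rule ccontr)
    assume nx: "\<not> ?thesis"
    have "gromov_product a x m > gromov_product a y m + \<delta>"
      using nx am my ax D_def d0 by (simp only: gp_alt dist_commute; linarith)
    from hypI[OF h this] show False
      using nx am my ax xy D_def d0 by (simp only: gp_alt dist_commute; linarith)
  qed
  have Dlow: "D \<ge> t - 2*\<alpha> - 2*\<delta>"
  proof (cases "dist (g x) x > 2*\<alpha> + 2*\<delta>")
    case True
    from chain[OF h iso a True, of a] show ?thesis using ga unfolding D_def t_def
      by (simp add: dist_commute)
  next
    case False
    then show ?thesis using D0 unfolding t_def by (simp add: dist_commute)
  qed
  have "infdist x (char_set \<delta> g) \<le> dist x m" by (rule infdist_le[OF mC])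
  then show ?thesis unfolding nbhd_def using mC xm Dlow by auto
qed

theorem proposition2p31:
  fixes \<delta> :: real and x0 :: "'a::metric_space"
    and u1 u2 v w1 w2 :: "'a \<Rightarrow> 'a"
  assumes "\<delta> \<ge> 0"
    and "geodesic_space TYPE('a)"
    and "hyperbolic \<delta> TYPE('a)"
    and "isometry u1" "isometry u2" "isometry v" "isometry w1" "isometry w2"
    and "u1 \<circ> v \<circ> w1 = u2 \<circ> v \<circ> w2"
    and "reduced_at \<delta> u1 v x0" "reduced_at \<delta> u2 v x0"
    and "reduced_at \<delta> v w1 x0" "reduced_at \<delta> v w2 x0"
    and "dist (v x0) x0 > 26 * \<delta>"
    and "dist (u1 x0) (u2 x0) \<le> dist (v x0) x0"
    and "dist (u1 x0) x0 \<le> dist (u2 x0) x0"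
  shows "x0 \<in> nbhd (char_set \<delta> (inv u1 \<circ> u2)) (190 * \<delta>) \<and>
         v x0 \<in> nbhd (char_set \<delta> (inv u1 \<circ> u2)) (190 * \<delta>) \<and>
         gromov_product x0 (u2 x0) (u1 x0) \<le> 24 * \<delta> \<and>
         gromov_product (u1 x0) (u1 (v x0)) (u2 x0) \<le> 66 * \<delta> \<and>
         gromov_product (u2 x0) (u2 (v x0)) (u1 (v x0)) \<le> 138 * \<delta>"
proof -
  note h = assms(3) and geo = assms(2)
  have b1: "bij u1" and i1: "\<And>a b. dist (u1 a) (u1 b) = dist a b"
    using assms(4) unfolding isometry_def by auto
  have b2: "bij u2" and i2: "\<And>a b. dist (u2 a) (u2 b) = dist a b"
    using assms(5) unfolding isometry_def by auto
  have bv: "bij v" and iv: "\<And>a b. dist (v a) (v b) = dist a b"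
    using assms(6) unfolding isometry_def by auto
  have inv1: "u1 (inv u1 y) = y" for y using b1 by (simp add: bij_is_surj surj_f_inv_f)
  have invv: "v (inv v y) = y" for y using bv by (simp add: bij_is_surj surj_f_inv_f)
  have invd: "dist (inv u1 p) q = dist p (u1 q)" for p q
    using i1[of "inv u1 p" q] inv1 by simp
  have iinv: "dist (inv u1 p) (inv u1 q) = dist p q" for p q
    using i1[of "inv u1 p" "inv u1 q"] inv1 by simp
  define g where "g = inv u1 \<circ> u2"
  have bg: "bij g" unfolding g_def by (rule bij_comp[OF b2 bij_imp_bij_inv[OF b1]])
  have ig: "\<And>a b. dist (g a) (g b) = dist a b" unfolding g_def by (simp add: iinv i2)
  have u1g: "u1 (g y) = u2 y" for y unfolding g_def by (simp add: inv1)
  define L where "L = dist (v x0) x0"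
  define z where "z = u1 (v (w1 x0))"
  have z2: "z = u2 (v (w2 x0))" unfolding z_def using fun_cong[OF assms(9), of x0] by simp
  have iso1: "\<forall>a b. dist (u1 a) (u1 b) = dist a b" using i1 by blast
  have iso2: "\<forall>a b. dist (u2 a) (u2 b) = dist a b" using i2 by blast
  have iso1v: "\<forall>a b. dist (u1 (v a)) (u1 (v b)) = dist a b" using i1 iv by simp
  have iso2v: "\<forall>a b. dist (u2 (v a)) (u2 (v b)) = dist a b" using i2 iv by simp
  have F1: "gromov_product x0 (u1 (v x0)) (u1 x0) \<le> \<delta>"
    using assms(10) gp_iso[OF iso1, of "inv u1 x0" "v x0" x0] inv1 unfolding reduced_at_def by simp
  have inv2: "u2 (inv u2 y) = y" for y using b2 by (simp add: bij_is_surj surj_f_inv_f)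
  have F2: "gromov_product x0 (u2 (v x0)) (u2 x0) \<le> \<delta>"
    using assms(11) gp_iso[OF iso2, of "inv u2 x0" "v x0" x0] inv2 unfolding reduced_at_def by simp
  have F3: "gromov_product (u1 x0) z (u1 (v x0)) \<le> \<delta>"
    using assms(12) gp_iso[OF iso1v, of "inv v x0" "w1 x0" x0] invv unfolding reduced_at_def z_def by simp
  have F4: "gromov_product (u2 x0) z (u2 (v x0)) \<le> \<delta>"
    using assms(13) gp_iso[OF iso2v, of "inv v x0" "w2 x0" x0] invv unfolding reduced_at_def z2 by simp
  have L1: "dist (u1 x0) (u1 (v x0)) = L" unfolding L_def i1 by (simp add: dist_commute)
  have L2: "dist (u2 x0) (u2 (v x0)) = L" unfolding L_def i2 by (simp add: dist_commute)
  have Lb: "L > 26*\<delta>" using assms(14) unfolding L_def .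
  have tL: "dist (u1 x0) (u2 x0) \<le> L" using assms(15) unfolding L_def .
  have ord: "dist x0 (u1 x0) \<le> dist x0 (u2 x0)" using assms(16) by (simp add: dist_commute)
  define k2 where "k2 = u2 (inv u1 (u2 x0))"
  define k3 where "k3 = u2 (inv u1 (u2 (v x0)))"
  have K1: "dist k2 (u2 x0) = dist (u1 x0) (u2 x0)" unfolding k2_def i2 invd by (simp add: dist_commute)
  have K2: "dist k2 (u2 (v x0)) = dist (u2 x0) (u1 (v x0))" unfolding k2_def i2 invd ..
  have K3: "dist k3 (u2 (v x0)) = dist (u1 (v x0)) (u2 (v x0))" unfolding k3_def i2 invd by (simp add: dist_commute)
  have K4: "dist k3 (u2 x0) = dist (u1 x0) (u2 (v x0))" unfolding k3_def i2 invd by (simp add: dist_commute)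
  have C: "gromov_product x0 (u2 x0) (u1 x0) \<le> 24*\<delta> \<and> gromov_product (u1 x0) (u1 (v x0)) (u2 x0) \<le> 66*\<delta> \<and>
    gromov_product (u2 x0) (u2 (v x0)) (u1 (v x0)) \<le> 138*\<delta> \<and> gromov_product (u1 x0) k2 (u2 x0) \<le> 187*\<delta> \<and>
    gromov_product (u1 (v x0)) k3 (u2 (v x0)) \<le> 187*\<delta>"
    by (rule core[OF h F1 F2 F3 F4 L1 L2 Lb tL ord K1 K2 K3 K4])
  have X0: "gromov_product x0 (g (g x0)) (g x0) \<le> 187*\<delta>"
  proof -
    have "gromov_product x0 (g (g x0)) (g x0) = gromov_product (u1 x0) (u1 (g (g x0))) (u1 (g x0))"
      using gp_iso[OF iso1] by simp
    also have "\<dots> = gromov_product (u1 x0) k2 (u2 x0)" unfolding u1g k2_def g_def by (simp add: inv1)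
    finally show ?thesis using C by linarith
  qed
  have X1: "gromov_product (v x0) (g (g (v x0))) (g (v x0)) \<le> 187*\<delta>"
  proof -
    have "gromov_product (v x0) (g (g (v x0))) (g (v x0)) = gromov_product (u1 (v x0)) (u1 (g (g (v x0)))) (u1 (g (v x0)))"
      using gp_iso[OF iso1] by simp
    also have "\<dots> = gromov_product (u1 (v x0)) k3 (u2 (v x0))" unfolding u1g k3_def g_def by (simp add: inv1)
    finally show ?thesis using C by linarith
  qed
  have N0: "x0 \<in> nbhd (char_set \<delta> g) (187*\<delta> + 3*\<delta>)" by (rule near_C[OF h geo bg ig X0])
  have N1: "v x0 \<in> nbhd (char_set \<delta> g) (187*\<delta> + 3*\<delta>)" by (rule near_C[OF h geo bg ig X1])
  have e: "187*\<delta> + 3*\<delta> = 190*\<delta>" by simp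
  show ?thesis using N0 N1 C unfolding e g_def by blast
qed

end
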